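(* For every indexed grammar $G$ there is a grounded indexed grammar $G'$ such that $L(G') = L(G)$.
   Context: An indexed grammar is a tuple $G=(N,T,F,P,S)$ where $N$ (nonterminals), $T$ (terminals), $F$ (stack symbols) are finite alphabets, $S\in N$ is the start symbol, and $P$ is a finite set of productions of the forms $A\to r$, $A\to Bf$, $Af\to r$ with $A,B\in N$, $f\in F$, $r\in(N\cup T)^*$. Sentential forms are strings over $NF^*\cup T$; in $Af_1\cdots f_k$ the string $f_1\cdots f_k$ is the stack of $A$ with $f_1$ on top. For $r\in(N\cup T)^*$ and $x\in F^*$, $r\{x\}$ denotes $r$ with every $A\in N$ replaced by $Ax$. One writes $q\to r$ if $q=q_1\,Ax\,q_2$ and $r=q_1\,p\{y\}\,q_2$ for some $q_1,q_2\in(NF^*\cup T)^*$, $A\in N$, $x,y\in F^*$, $p\in (N\cup T)^*$, where either (1) $A\to p\in P$ and $y=x$, or (2) $p=B\in N$, $A\to Bf\in P$ and $y=fx$, or (3) $Af\to p\in P$ and $x=fy$. Let $\xrightarrow{*}$ be the reflexive transitive closure; $L(Ax)=\{s\in T^*: Ax\xrightarrow{*}s\}$ and $L(G)=L(S)$ (start symbol with empty stack). $G$ is grounded if there is a symbol $\$\in F$ (bottom-of-stack symbol) such that every production of $P$ has one of the forms $S\to A\$$, $A\to r$, $A\to Bf$, $Af\to r$, $A\$\to s$, with $A,B\in N\setminus\{S\}$, $f\in F\setminus\{\$\}$, $r\in(N\setminus\{S\})^+$, $s\in T^*$. *)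

theory Defs
  imports Main
begin

datatype ('n, 't) sym = NT 'n | Tm 't

text \<open>Productions: A -> r, A -> B f, A f -> r.\<close>
datatype ('n, 't, 'f) production =
    Plain 'n "('n, 't) sym list"
  | Push 'n 'n 'f
  | Pop 'n 'f "('n, 't) sym list"

record ('n, 't, 'f) igrammar =
  Nts :: "'n set"
  Tms :: "'t set"
  Stk :: "'f set"
  Prods :: "('n, 't, 'f) production set"
  Start :: 'n

definition sym_ok :: "'n set \<Rightarrow> 't set \<Rightarrow> ('n, 't) sym \<Rightarrow> bool" where
  "sym_ok N T s = (case s of NT A \<Rightarrow> A \<in> N | Tm a \<Rightarrow> a \<in> T)"

fun prod_ok :: "'n set \<Rightarrow> 't set \<Rightarrow> 'f set \<Rightarrow> ('n, 't, 'f) production \<Rightarrow> bool" where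
  "prod_ok N T F (Plain A r) = (A \<in> N \<and> (\<forall>s\<in>set r. sym_ok N T s))"
| "prod_ok N T F (Push A B f) = (A \<in> N \<and> B \<in> N \<and> f \<in> F)"
| "prod_ok N T F (Pop A f r) = (A \<in> N \<and> f \<in> F \<and> (\<forall>s\<in>set r. sym_ok N T s))"

definition indexed_grammar :: "('n, 't, 'f) igrammar \<Rightarrow> bool" where
  "indexed_grammar G \<longleftrightarrow>
     finite (Nts G) \<and> finite (Tms G) \<and> finite (Stk G) \<and> finite (Prods G) \<and>
     Start G \<in> Nts G \<and> (\<forall>p\<in>Prods G. prod_ok (Nts G) (Tms G) (Stk G) p)"

text \<open>Items of sentential forms: a nonterminal with its stack (top first), or a terminal.\<close>
datatype ('n, 't, 'f) item = NTi 'n "'f list" | TmI 't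

fun inst :: "'f list \<Rightarrow> ('n, 't) sym \<Rightarrow> ('n, 't, 'f) item" where
  "inst x (NT A) = NTi A x"
| "inst x (Tm a) = TmI a"

inductive step :: "('n, 't, 'f) igrammar \<Rightarrow> ('n, 't, 'f) item list \<Rightarrow> ('n, 't, 'f) item list \<Rightarrow> bool"
  for G where
  plain: "Plain A p \<in> Prods G \<Longrightarrow>
     step G (q1 @ [NTi A x] @ q2) (q1 @ map (inst x) p @ q2)"
| push: "Push A B f \<in> Prods G \<Longrightarrow>
     step G (q1 @ [NTi A x] @ q2) (q1 @ [NTi B (f # x)] @ q2)"
| pop: "Pop A f p \<in> Prods G \<Longrightarrow>
     step G (q1 @ [NTi A (f # y)] @ q2) (q1 @ map (inst y) p @ q2)"

abbreviation derives where "derives G \<equiv> (step G)\<^sup>*\<^sup>*"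

definition lang_of :: "('n, 't, 'f) igrammar \<Rightarrow> 'n \<Rightarrow> 'f list \<Rightarrow> 't list set" where
  "lang_of G A x = {s. s \<in> lists (Tms G) \<and> derives G [NTi A x] (map TmI s)}"

definition lang :: "('n, 't, 'f) igrammar \<Rightarrow> 't list set" where
  "lang G = lang_of G (Start G) []"

text \<open>Grounded grammars, with bottom-of-stack symbol d.\<close>
fun grounded_prod :: "('n, 't, 'f) igrammar \<Rightarrow> 'f \<Rightarrow> ('n, 't, 'f) production \<Rightarrow> bool" where
  "grounded_prod G d (Plain A r) =
     (A \<noteq> Start G \<and> r \<noteq> [] \<and> (\<forall>s\<in>set r. \<exists>B. s = NT B \<and> B \<in> Nts G - {Start G}))"
| "grounded_prod G d (Push A B f) =
     ((A = Start G \<and> f = d \<and> B \<in> Nts G - {Start G}) \<or>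
      (A \<in> Nts G - {Start G} \<and> B \<in> Nts G - {Start G} \<and> f \<in> Stk G - {d}))"
| "grounded_prod G d (Pop A f r) =
     (A \<in> Nts G - {Start G} \<and>
      ((f \<in> Stk G - {d} \<and> r \<noteq> [] \<and> (\<forall>s\<in>set r. \<exists>B. s = NT B \<and> B \<in> Nts G - {Start G})) \<or>
       (f = d \<and> (\<forall>s\<in>set r. \<exists>a. s = Tm a \<and> a \<in> Tms G))))"

definition grounded :: "('n, 't, 'f) igrammar \<Rightarrow> bool" where
  "grounded G \<longleftrightarrow> (\<exists>d\<in>Stk G. \<forall>p\<in>Prods G. grounded_prod G d p)"

end

theory Submission
  imports Defs
begin

lemma step_ctx: "step G u v \<Longrightarrow> step G (p@u@q) (p@v@q)"
proof (induction rule: step.induct)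
  case (plain A ps q1 x q2)
  then show ?case using step.plain[of A ps G "p@q1" x "q2@q"] by simp
next
  case (push A B f q1 x q2)
  then show ?case using step.push[of A B f G "p@q1" x "q2@q"] by simp
next
  case (pop A f ps q1 y q2)
  then show ?case using step.pop[of A f ps G "p@q1" y "q2@q"] by simp
qed

lemma derives_ctx: "derives G u v \<Longrightarrow> derives G (p@u@q) (p@v@q)"
  by (induction rule: rtranclp_induct) (auto intro: rtranclp.rtrancl_into_rtrancl step_ctx)

lemma derives_app: "derives G u u' \<Longrightarrow> derives G v v' \<Longrightarrow> derives G (u@v) (u'@v')"
  using derives_ctx[of G u u' "[]" v] derives_ctx[of G v v' u' "[]"] by simp

lemma derives_concat: "(\<And>x. x\<in>set xs \<Longrightarrow> derives G (g x) (h x)) \<Longrightarrow> derives G (concat (map g xs)) (concat (map h xs))"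
  by (induction xs) (auto intro: derives_app)

lemma plain1: "Plain A p \<in> Prods G \<Longrightarrow> step G [NTi A x] (map (inst x) p)"
  using step.plain[of A p G "[]" x "[]"] by simp
lemma pop1: "Pop A f p \<in> Prods G \<Longrightarrow> step G [NTi A (f#y)] (map (inst y) p)"
  using step.pop[of A f p G "[]" y "[]"] by simp

lemma inst_NTi0: "inst x s = NTi B x' \<Longrightarrow> x' = x"
  by (cases s) auto
lemma inst_NTi: "NTi B x' \<in> set (map (inst x) p) \<Longrightarrow> x' = x"
  by (force dest: inst_NTi0[OF sym])

locale gr =
  fixes G :: "('n,'t,'f) igrammar" and cN :: "'n \<Rightarrow> nat" and cT :: "'t \<Rightarrow> nat" and cF :: "'f \<Rightarrow> nat"
  assumes ig: "indexed_grammar G" and injN: "inj_on cN (Nts G)"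
    and injT: "inj_on cT (Tms G)" and injF: "inj_on cF (Stk G)"
begin

definition nN :: "'n \<Rightarrow> nat" where "nN A = 2 + 2 * cN A"
definition tN :: "'t \<Rightarrow> nat" where "tN a = 3 + 2 * cT a"
definition enc :: "'f list \<Rightarrow> nat list" where "enc x = map (\<lambda>f. Suc (cF f)) x @ [0]"
fun trS :: "('n,'t) sym \<Rightarrow> (nat,'t) sym" where
  "trS (NT B) = NT (nN B)" | "trS (Tm a) = NT (tN a)"
definition trR :: "('n,'t) sym list \<Rightarrow> (nat,'t) sym list" where
  "trR r = (if r = [] then [NT 1] else map trS r)"
fun trP :: "('n,'t,'f) production \<Rightarrow> (nat,'t,nat) production" where
  "trP (Plain A r) = Plain (nN A) (trR r)"
| "trP (Push A B f) = Push (nN A) (nN B) (Suc (cF f))"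
| "trP (Pop A f r) = Pop (nN A) (Suc (cF f)) (trR r)"

definition SF :: "nat set" where "SF = Suc ` cF ` Stk G"
definition PR :: "(nat,'t,nat) production set" where
  "PR = {Push 0 (nN (Start G)) 0} \<union> trP ` Prods G \<union> (\<lambda>f. Pop 1 f [NT 1]) ` SF \<union> {Pop 1 0 []}
     \<union> (\<lambda>(a,f). Pop (tN a) f [NT (tN a)]) ` (Tms G \<times> SF) \<union> (\<lambda>a. Pop (tN a) 0 [Tm a]) ` Tms G"
definition NS :: "nat set" where "NS = {0,1} \<union> nN ` Nts G \<union> tN ` Tms G"
definition H :: "(nat,'t,nat) igrammar" where
  "H = \<lparr>Nts = NS, Tms = Tms G, Stk = insert 0 SF, Prods = PR, Start = 0\<rparr>"

lemma H_simps[simp]: "Prods H = PR" "Start H = 0" "Tms H = Tms G" "Stk H = insert 0 SF" "Nts H = NS"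
  by (simp_all add: H_def)

lemma ne[simp]: "nN A \<noteq> 0" "nN A \<noteq> 1" "tN a \<noteq> 0" "tN a \<noteq> 1" "nN A \<noteq> tN a" "tN a \<noteq> nN A" "nN A \<noteq> Suc 0" "tN a \<noteq> Suc 0" "0 < nN A" "0 < tN a"
  "nN A = nN B \<longleftrightarrow> cN A = cN B" "tN a = tN b \<longleftrightarrow> cT a = cT b"
  unfolding nN_def tN_def by presburger+

lemma G_ok: "finite (Nts G)" "finite (Tms G)" "finite (Stk G)" "finite (Prods G)" "Start G \<in> Nts G"
  "p \<in> Prods G \<Longrightarrow> prod_ok (Nts G) (Tms G) (Stk G) p"
  using ig unfolding indexed_grammar_def by auto

lemma trS_ok: "sym_ok (Nts G) (Tms G) s \<Longrightarrow> sym_ok NS (Tms G) (trS s)"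
  by (cases s) (auto simp: sym_ok_def NS_def)

lemma trR_ok: "\<forall>s\<in>set r. sym_ok (Nts G) (Tms G) s \<Longrightarrow> \<forall>s\<in>set (trR r). sym_ok NS (Tms G) s"
  unfolding trR_def using trS_ok by (auto simp: sym_ok_def NS_def)

lemma trP_ok: "q \<in> Prods G \<Longrightarrow> prod_ok NS (Tms G) (insert 0 SF) (trP q)"
  using G_ok(6)[of q] trR_ok by (cases q) (auto simp: NS_def SF_def)

lemma H_ig: "indexed_grammar H"
proof -
  have "finite PR" unfolding PR_def SF_def using G_ok by auto
  moreover have "\<forall>p\<in>PR. prod_ok NS (Tms G) (insert 0 SF) p"
    unfolding PR_def using G_ok trP_ok by (auto simp: NS_def sym_ok_def)
  ultimately show ?thesis unfolding indexed_grammar_def H_simps using G_ok by (auto simp: NS_def SF_def)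
qed


lemma PR_mem[simp]:
  "Push 0 (nN (Start G)) 0 \<in> PR"
  "q \<in> Prods G \<Longrightarrow> trP q \<in> PR"
  "f \<in> SF \<Longrightarrow> Pop 1 f [NT 1] \<in> PR"
  "Pop 1 0 [] \<in> PR"
  "a \<in> Tms G \<Longrightarrow> f \<in> SF \<Longrightarrow> Pop (tN a) f [NT (tN a)] \<in> PR"
  "a \<in> Tms G \<Longrightarrow> Pop (tN a) 0 [Tm a] \<in> PR"
  unfolding PR_def by force+

fun fw :: "('n,'t,'f) item \<Rightarrow> (nat,'t,nat) item list" where
  "fw (NTi A x) = [NTi (nN A) (enc x)]" | "fw (TmI a) = [TmI a]"

abbreviation fws where "fws u \<equiv> concat (map fw u)"

definition okst :: "('n,'t,'f) item list \<Rightarrow> bool" where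
  "okst u = (\<forall>A x. NTi A x \<in> set u \<longrightarrow> set x \<subseteq> Stk G)"

lemma E_pop: "set x \<subseteq> Stk G \<Longrightarrow> derives H [NTi 1 (enc x)] []"
proof (induction x)
  case Nil
  have "Pop 1 0 [] \<in> Prods H" using PR_mem(4) by (simp only: H_simps)
  from pop1[OF this, of "[]"] show ?case by (simp add: enc_def)
next
  case (Cons f x)
  have "Pop 1 (Suc (cF f)) [NT 1] \<in> Prods H" using Cons.prems PR_mem(3)[of "Suc (cF f)"] by (simp add: SF_def)
  from pop1[OF this, of "enc x"] have "step H [NTi 1 (enc (f#x))] [NTi 1 (enc x)]" by (simp add: enc_def)
  with Cons show ?case by (simp add: converse_rtranclp_into_rtranclp)
qed

lemma T_pop: "a \<in> Tms G \<Longrightarrow> set x \<subseteq> Stk G \<Longrightarrow> derives H [NTi (tN a) (enc x)] [TmI a]"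
proof (induction x)
  case Nil
  have "Pop (tN a) 0 [Tm a] \<in> Prods H" using Nil by simp
  from pop1[OF this, of "[]"] show ?case by (simp add: enc_def)
next
  case (Cons f x)
  have "Pop (tN a) (Suc (cF f)) [NT (tN a)] \<in> Prods H" using Cons.prems by (simp add: SF_def)
  from pop1[OF this, of "enc x"] have "step H [NTi (tN a) (enc (f#x))] [NTi (tN a) (enc x)]" by (simp add: enc_def)
  with Cons show ?case by (simp add: converse_rtranclp_into_rtranclp)
qed

lemma concat_single: "concat (map (\<lambda>s. [f s]) p) = map f p"
  by (induction p) auto

lemma sim_sym: "set x \<subseteq> Stk G \<Longrightarrow> sym_ok (Nts G) (Tms G) s \<Longrightarrow>
   derives H [inst (enc x) (trS s)] (fw (inst x s))"
  by (cases s) (auto simp: sym_ok_def T_pop)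

lemma sim_rhs: assumes "set x \<subseteq> Stk G" "\<forall>s\<in>set p. sym_ok (Nts G) (Tms G) s"
  shows "derives H (map (inst (enc x)) (trR p)) (fws (map (inst x) p))"
proof (cases "p = []")
  case True then show ?thesis using E_pop[OF assms(1)] by (simp add: trR_def)
next
  case False
  have "derives H (concat (map (\<lambda>s. [inst (enc x) (trS s)]) p)) (concat (map (\<lambda>s. fw (inst x s)) p))"
    by (rule derives_concat) (use assms sim_sym in auto)
  then show ?thesis using False by (simp add: trR_def concat_single comp_def)
qed

lemma fw_step: "step G u v \<Longrightarrow> okst u \<Longrightarrow> derives H (fws u) (fws v)"
proof (induction rule: step.induct)
  case (plain A p q1 x q2)
  have ok: "set x \<subseteq> Stk G" using plain.prems by (auto simp: okst_def)
  have sy: "\<forall>s\<in>set p. sym_ok (Nts G) (Tms G) s" using G_ok(6)[OF plain.hyps] by simp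
  have "Plain (nN A) (trR p) \<in> Prods H" using PR_mem(2)[OF plain.hyps] by simp
  then have "step H (fws q1 @ [NTi (nN A) (enc x)] @ fws q2) (fws q1 @ map (inst (enc x)) (trR p) @ fws q2)"
    by (rule step.plain)
  moreover have "derives H (fws q1 @ map (inst (enc x)) (trR p) @ fws q2) (fws q1 @ fws (map (inst x) p) @ fws q2)"
    using derives_ctx[OF sim_rhs[OF ok sy]] .
  ultimately have "derives H (fws q1 @ [NTi (nN A) (enc x)] @ fws q2) (fws q1 @ fws (map (inst x) p) @ fws q2)"
    by (rule converse_rtranclp_into_rtranclp)
  then show ?case by simp
next
  case (push A B f q1 x q2)
  have "Push (nN A) (nN B) (Suc (cF f)) \<in> Prods H" using PR_mem(2)[OF push.hyps] by simp
  then have "step H (fws q1 @ [NTi (nN A) (enc x)] @ fws q2) (fws q1 @ [NTi (nN B) (Suc (cF f) # enc x)] @ fws q2)"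
    by (rule step.push)
  then show ?case by (simp add: enc_def)
next
  case (pop A f p q1 y q2)
  have ok: "set y \<subseteq> Stk G" using pop.prems by (auto simp: okst_def)
  have sy: "\<forall>s\<in>set p. sym_ok (Nts G) (Tms G) s" using G_ok(6)[OF pop.hyps] by simp
  have "Pop (nN A) (Suc (cF f)) (trR p) \<in> Prods H" using PR_mem(2)[OF pop.hyps] by simp
  then have "step H (fws q1 @ [NTi (nN A) (Suc (cF f) # enc y)] @ fws q2) (fws q1 @ map (inst (enc y)) (trR p) @ fws q2)"
    by (rule step.pop)
  moreover have "derives H (fws q1 @ map (inst (enc y)) (trR p) @ fws q2) (fws q1 @ fws (map (inst y) p) @ fws q2)"
    using derives_ctx[OF sim_rhs[OF ok sy]] .
  ultimately have "derives H (fws q1 @ [NTi (nN A) (Suc (cF f) # enc y)] @ fws q2) (fws q1 @ fws (map (inst y) p) @ fws q2)"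
    by (rule converse_rtranclp_into_rtranclp)
  then show ?case by (simp add: enc_def)
qed

lemma okst_app: "okst (q1 @ m @ q2) \<longleftrightarrow> okst q1 \<and> okst m \<and> okst q2"
  unfolding okst_def set_append Un_iff by blast

lemma okst_single: "okst [NTi A x] \<longleftrightarrow> set x \<subseteq> Stk G"
  unfolding okst_def by simp

lemma okst_inst: "set x \<subseteq> Stk G \<Longrightarrow> okst (map (inst x) p)"
  unfolding okst_def by (metis inst_NTi)

lemma okst_step: "step G u v \<Longrightarrow> okst u \<Longrightarrow> okst v"
proof (induction rule: step.induct)
  case (plain A p q1 x q2)
  then show ?case using okst_inst[of x p] by (simp only: okst_app okst_single)
next
  case (push A B f q1 x q2)
  have "f \<in> Stk G" using G_ok(6)[OF push.hyps] by simp
  then show ?case using push.prems by (simp only: okst_app okst_single) simp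
next
  case (pop A f p q1 y q2)
  then show ?case using okst_inst[of y p] by (simp only: okst_app okst_single) simp
qed

lemma fw_derives: assumes "derives G u v" "okst u" shows "derives H (fws u) (fws v) \<and> okst v"
  using assms
proof (induction rule: rtranclp_induct)
  case base then show ?case by simp
next
  case (step v w)
  then have "derives H (fws u) (fws v)" "okst v" by auto
  then show ?case using step fw_step okst_step by (meson rtranclp_trans)
qed


definition dec :: "nat list \<Rightarrow> 'f list" where
  "dec st = map (\<lambda>k. inv_into (Stk G) cF (k - 1)) (butlast st)"

fun bw :: "(nat,'t,nat) item \<Rightarrow> ('n,'t,'f) item list" where
  "bw (TmI a) = [TmI a]"
| "bw (NTi n st) = (if n = 0 then [NTi (Start G) []] else if n = 1 then []
     else if even n then [NTi (inv_into (Nts G) cN ((n - 2) div 2)) (dec st)]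
     else [TmI (inv_into (Tms G) cT ((n - 3) div 2))])"

abbreviation bws where "bws u \<equiv> concat (map bw u)"

lemma dec_enc: assumes "set x \<subseteq> Stk G" shows "dec (enc x) = x"
proof -
  have "\<forall>f\<in>set x. inv_into (Stk G) cF (cF f) = f" using assms injF by (auto intro: inv_into_f_f)
  then show ?thesis unfolding dec_def enc_def by (simp add: comp_def map_idI)
qed

declare bw.simps(2)[simp del]

lemma bw_0[simp]: "bw (NTi 0 st) = [NTi (Start G) []]" by (simp add: bw.simps)
lemma bw_1[simp]: "bw (NTi 1 st) = []" "bw (NTi (Suc 0) st) = []" by (simp_all add: bw.simps)

lemma bw_nN: "A \<in> Nts G \<Longrightarrow> set x \<subseteq> Stk G \<Longrightarrow> bw (NTi (nN A) (enc x)) = [NTi A x]"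
  by (simp add: bw.simps nN_def dec_enc inv_into_f_f injN)

lemma bw_tN: "a \<in> Tms G \<Longrightarrow> bw (NTi (tN a) st) = [TmI a]"
  by (simp add: bw.simps tN_def inv_into_f_f injT)

fun wfi :: "(nat,'t,nat) item \<Rightarrow> bool" where
  "wfi (TmI a) = True"
| "wfi (NTi n st) = ((n = 0 \<and> st = []) \<or> n = 1 \<or>
     (\<exists>A\<in>Nts G. \<exists>x. set x \<subseteq> Stk G \<and> n = nN A \<and> st = enc x) \<or> (\<exists>a\<in>Tms G. n = tN a))"

definition wf :: "(nat,'t,nat) item list \<Rightarrow> bool" where "wf u = (\<forall>i\<in>set u. wfi i)"

lemma wfi_nN: "wfi (NTi (nN A) st) \<Longrightarrow> A \<in> Nts G \<Longrightarrow> \<exists>x. set x \<subseteq> Stk G \<and> st = enc x"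
  using inj_on_eq_iff[OF injN] by auto

lemma wfi_tN: "a \<in> Tms G \<and> n = tN a \<Longrightarrow> wfi (NTi n st)"
  by auto

lemma wfi_0: "wfi (NTi 0 st) \<Longrightarrow> st = []"
  by auto

lemma bw_sym: "set x \<subseteq> Stk G \<Longrightarrow> sym_ok (Nts G) (Tms G) s \<Longrightarrow> bw (inst (enc x) (trS s)) = [inst x s]"
  by (cases s) (auto simp: sym_ok_def bw_nN bw_tN)

lemma wfi_sym: "set x \<subseteq> Stk G \<Longrightarrow> sym_ok (Nts G) (Tms G) s \<Longrightarrow> wfi (inst (enc x) (trS s))"
  by (cases s) (auto simp: sym_ok_def)

lemma bw_rhs: assumes "set x \<subseteq> Stk G" "\<forall>s\<in>set r. sym_ok (Nts G) (Tms G) s"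
  shows "bws (map (inst (enc x)) (trR r)) = map (inst x) r"
proof (cases "r = []")
  case True then show ?thesis by (simp add: trR_def)
next
  case False
  have "bws (map (inst (enc x)) (map trS r)) = map (inst x) r"
    using assms(2) by (induction r) (auto simp: bw_sym[OF assms(1)])
  then show ?thesis using False by (simp add: trR_def)
qed

lemma wf_rhs: assumes "set x \<subseteq> Stk G" "\<forall>s\<in>set r. sym_ok (Nts G) (Tms G) s"
  shows "wf (map (inst (enc x)) (trR r))"
  using assms wfi_sym unfolding wf_def trR_def by auto

lemma enc_cons: "set x0 \<subseteq> Stk G \<Longrightarrow> f \<in> Stk G \<Longrightarrow> enc x0 = Suc (cF f) # y \<Longrightarrow> \<exists>x1. x0 = f # x1 \<and> y = enc x1"
  by (cases x0) (auto simp: enc_def inj_on_eq_iff[OF injF])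

lemma PR_Plain: assumes "Plain A0 p \<in> PR" shows "\<exists>A r. Plain A r \<in> Prods G \<and> A0 = nN A \<and> p = trR r"
proof -
  have "Plain A0 p \<in> trP ` Prods G" using assms unfolding PR_def by auto
  then obtain q where "q \<in> Prods G" "Plain A0 p = trP q" by auto
  then show ?thesis by (cases q) auto
qed

lemma PR_Push: assumes "Push A0 B0 f0 \<in> PR"
  shows "(A0 = 0 \<and> B0 = nN (Start G) \<and> f0 = 0) \<or>
    (\<exists>A B f. Push A B f \<in> Prods G \<and> A0 = nN A \<and> B0 = nN B \<and> f0 = Suc (cF f))"
proof -
  have "Push A0 B0 f0 = Push 0 (nN (Start G)) 0 \<or> Push A0 B0 f0 \<in> trP ` Prods G" using assms unfolding PR_def by auto
  moreover have "\<exists>A B f. Push A B f \<in> Prods G \<and> A0 = nN A \<and> B0 = nN B \<and> f0 = Suc (cF f)"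
    if "Push A0 B0 f0 \<in> trP ` Prods G"
  proof -
    from that obtain q where "q \<in> Prods G" "Push A0 B0 f0 = trP q" by auto
    then show ?thesis by (cases q) auto
  qed
  ultimately show ?thesis by auto
qed

lemma PR_Pop: assumes "Pop A0 f0 p \<in> PR"
  shows "(\<exists>A f r. Pop A f r \<in> Prods G \<and> A0 = nN A \<and> f0 = Suc (cF f) \<and> p = trR r) \<or>
    (A0 = 1 \<and> p = [NT 1]) \<or> (A0 = 1 \<and> p = []) \<or>
    (\<exists>a\<in>Tms G. A0 = tN a \<and> p = [NT (tN a)]) \<or> (\<exists>a\<in>Tms G. A0 = tN a \<and> p = [Tm a])"
proof -
  have "Pop A0 f0 p \<in> trP ` Prods G \<or> (A0 = 1 \<and> p = [NT 1]) \<or> (A0 = 1 \<and> p = []) \<or>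
    (\<exists>a\<in>Tms G. A0 = tN a \<and> p = [NT (tN a)]) \<or> (\<exists>a\<in>Tms G. A0 = tN a \<and> p = [Tm a])"
    using assms unfolding PR_def by auto
  moreover have "\<exists>A f r. Pop A f r \<in> Prods G \<and> A0 = nN A \<and> f0 = Suc (cF f) \<and> p = trR r"
    if "Pop A0 f0 p \<in> trP ` Prods G"
  proof -
    from that obtain q where "q \<in> Prods G" "Pop A0 f0 p = trP q" by auto
    then show ?thesis by (cases q) auto
  qed
  ultimately show ?thesis by blast
qed


lemma bw_step: "step H u v \<Longrightarrow> wf u \<Longrightarrow> derives G (bws u) (bws v) \<and> wf v"
proof (induction rule: step.induct)
  case (plain A0 p q1 x q2)
  from PR_Plain[of A0 p] plain.hyps obtain A r where P: "Plain A r \<in> Prods G" "A0 = nN A" "p = trR r" by auto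
  have AN: "A \<in> Nts G" and sy: "\<forall>s\<in>set r. sym_ok (Nts G) (Tms G) s" using G_ok(6)[OF P(1)] by auto
  have "wfi (NTi A0 x)" using plain.prems by (simp add: wf_def)
  then obtain x0 where x0: "set x0 \<subseteq> Stk G" "x = enc x0" using wfi_nN AN P(2) by blast
  have st: "step G (bws q1 @ [NTi A x0] @ bws q2) (bws q1 @ map (inst x0) r @ bws q2)" by (rule step.plain[OF P(1)])
  have e1: "bws (q1 @ [NTi A0 x] @ q2) = bws q1 @ [NTi A x0] @ bws q2" using P x0 AN by (simp add: bw_nN)
  have e2: "bws (q1 @ map (inst x) p @ q2) = bws q1 @ map (inst x0) r @ bws q2" using P x0 bw_rhs[OF x0(1) sy] by simp
  have "derives G (bws (q1 @ [NTi A0 x] @ q2)) (bws (q1 @ map (inst x) p @ q2))"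
    unfolding e1 e2 using st by (rule r_into_rtranclp)
  moreover have "wf (q1 @ map (inst x) p @ q2)" using plain.prems wf_rhs[OF x0(1) sy] P x0 by (auto simp: wf_def)
  ultimately show ?case by simp
next
  case (push A0 B0 f0 q1 x q2)
  have wx: "wfi (NTi A0 x)" using push.prems by (simp add: wf_def)
  from PR_Push[of A0 B0 f0] push.hyps consider
    (st) "A0 = 0" "B0 = nN (Start G)" "f0 = 0"
  | (tr) A B f where "Push A B f \<in> Prods G" "A0 = nN A" "B0 = nN B" "f0 = Suc (cF f)" by auto
  then show ?case
  proof cases
    case st
    have x: "x = []" using wx st by auto
    have b: "bw (NTi (nN (Start G)) [0]) = [NTi (Start G) []]"
      using bw_nN[of "Start G" "[]"] G_ok(5) by (simp add: enc_def)
    have w: "wfi (NTi (nN (Start G)) [0])" using G_ok(5) by (auto simp: enc_def intro!: exI[of _ "[]"])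
    show ?thesis using st x b w push.prems by (simp add: wf_def)
  next
    case tr
    have ok: "A \<in> Nts G" "B \<in> Nts G" "f \<in> Stk G" using G_ok(6)[OF tr(1)] by auto
    then obtain x0 where x0: "set x0 \<subseteq> Stk G" "x = enc x0" using wfi_nN wx tr(2) by blast
    have stp: "step G (bws q1 @ [NTi A x0] @ bws q2) (bws q1 @ [NTi B (f # x0)] @ bws q2)" by (rule step.push[OF tr(1)])
    have ee: "Suc (cF f) # enc x0 = enc (f # x0)" by (simp add: enc_def)
    have e1: "bws (q1 @ [NTi A0 x] @ q2) = bws q1 @ [NTi A x0] @ bws q2" using tr x0 ok by (simp add: bw_nN)
    have e2: "bws (q1 @ [NTi B0 (f0 # x)] @ q2) = bws q1 @ [NTi B (f # x0)] @ bws q2"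
      using tr x0 ok bw_nN[of B "f # x0"] by (simp add: ee)
    have "derives G (bws (q1 @ [NTi A0 x] @ q2)) (bws (q1 @ [NTi B0 (f0 # x)] @ q2))"
      unfolding e1 e2 using stp by (rule r_into_rtranclp)
    moreover have "wfi (NTi B0 (f0 # x))" unfolding wfi.simps
      using tr ok x0 ee by (intro disjI2 disjI1 bexI[of _ B] exI[of _ "f # x0"]) auto
    ultimately show ?thesis using push.prems by (auto simp: wf_def)
  qed
next
  case (pop A0 f0 p q1 y q2)
  have wx: "wfi (NTi A0 (f0 # y))" using pop.prems by (simp add: wf_def)
  have wq: "wf q1" "wf q2" using pop.prems by (auto simp: wf_def)
  have "Pop A0 f0 p \<in> PR" using pop.hyps by simp
  from PR_Pop[OF this] consider
    (tr) A f r where "Pop A f r \<in> Prods G" "A0 = nN A" "f0 = Suc (cF f)" "p = trR r"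
  | (e1) "A0 = 1" "p = [NT 1]" | (e2) "A0 = 1" "p = []"
  | (t1) a where "a \<in> Tms G" "A0 = tN a" "p = [NT (tN a)]"
  | (t2) a where "a \<in> Tms G" "A0 = tN a" "p = [Tm a]" by blast
  then show ?case
  proof cases
    case tr
    have AN: "A \<in> Nts G" "f \<in> Stk G" and sy: "\<forall>s\<in>set r. sym_ok (Nts G) (Tms G) s" using G_ok(6)[OF tr(1)] by auto
    obtain x0 where x0: "set x0 \<subseteq> Stk G" "f0 # y = enc x0" using wfi_nN wx tr(2) AN by blast
    then obtain x1 where x1: "x0 = f # x1" "y = enc x1" using enc_cons[of x0 f y] AN tr(3) by auto
    have sx1: "set x1 \<subseteq> Stk G" using x0 x1 by auto
    have stp: "step G (bws q1 @ [NTi A (f # x1)] @ bws q2) (bws q1 @ map (inst x1) r @ bws q2)" by (rule step.pop[OF tr(1)])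
    have e1: "bws (q1 @ [NTi A0 (f0 # y)] @ q2) = bws q1 @ [NTi A (f # x1)] @ bws q2"
      using tr x0 x1 AN bw_nN[of A "f # x1"] by simp
    have e2: "bws (q1 @ map (inst y) p @ q2) = bws q1 @ map (inst x1) r @ bws q2"
      using tr x1 bw_rhs[OF sx1 sy] by simp
    have "derives G (bws (q1 @ [NTi A0 (f0 # y)] @ q2)) (bws (q1 @ map (inst y) p @ q2))"
      unfolding e1 e2 using stp by (rule r_into_rtranclp)
    moreover have "wf (q1 @ map (inst y) p @ q2)" using wq wf_rhs[OF sx1 sy] tr x1 by (auto simp: wf_def)
    ultimately show ?thesis by simp
  next
    case e1 then show ?thesis using wq by (auto simp: wf_def)
  next
    case e2 then show ?thesis using wq by (auto simp: wf_def)
  next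
    case t1
    have b: "bw (NTi A0 (f0#y)) = [TmI a]" "bw (NTi A0 y) = [TmI a]" using t1 bw_tN by auto
    have w: "wfi (NTi A0 y)" using wfi_tN[of a A0 y] t1 by simp
    have "bws (q1 @ [NTi A0 (f0 # y)] @ q2) = bws (q1 @ map (inst y) p @ q2)" using t1 b by simp
    moreover have "wf (q1 @ map (inst y) p @ q2)" using wq w t1 unfolding wf_def by (simp add: ball_Un)
    ultimately show ?thesis by simp
  next
    case t2
    have b: "bw (NTi A0 (f0#y)) = [TmI a]" using t2 bw_tN by auto
    have "bws (q1 @ [NTi A0 (f0 # y)] @ q2) = bws (q1 @ map (inst y) p @ q2)" using t2 b by simp
    moreover have "wf (q1 @ map (inst y) p @ q2)" using wq t2 unfolding wf_def by (simp add: ball_Un)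
    ultimately show ?thesis by simp
  qed
qed

lemma bw_derives: assumes "derives H u v" "wf u" shows "derives G (bws u) (bws v) \<and> wf v"
  using assms
proof (induction rule: rtranclp_induct)
  case base then show ?case by simp
next
  case (step v w)
  then have "derives G (bws u) (bws v)" "wf v" by auto
  then show ?case using step bw_step by (meson rtranclp_trans)
qed

lemma bws_TmI: "bws (map TmI s) = map TmI s" by (induction s) auto
lemma fws_TmI: "fws (map TmI s) = map TmI s" by (induction s) auto

lemma lang_H: "lang H = lang G"
proof
  show "lang H \<subseteq> lang G"
  proof
    fix s assume "s \<in> lang H"
    then have s: "s \<in> lists (Tms G)" "derives H [NTi 0 []] (map TmI s)" by (auto simp: lang_def lang_of_def)
    have "wf [NTi 0 []]" by (simp add: wf_def)
    from bw_derives[OF s(2) this] have "derives G [NTi (Start G) []] (map TmI s)" using bws_TmI[of s] by simp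
    then show "s \<in> lang G" using s(1) by (simp add: lang_def lang_of_def)
  qed
next
  show "lang G \<subseteq> lang H"
  proof
    fix s assume "s \<in> lang G"
    then have s: "s \<in> lists (Tms G)" "derives G [NTi (Start G) []] (map TmI s)" by (auto simp: lang_def lang_of_def)
    have "okst [NTi (Start G) []]" by (simp add: okst_def)
    from fw_derives[OF s(2) this] have d: "derives H [NTi (nN (Start G)) (enc [])] (map TmI s)" using fws_TmI[of s] by simp
    have "Push 0 (nN (Start G)) 0 \<in> Prods H" by simp
    from step.push[OF this, of "[]" "[]" "[]"] have "step H [NTi 0 []] [NTi (nN (Start G)) (enc [])]"
      by (simp add: enc_def)
    then have "derives H [NTi 0 []] (map TmI s)" using d by (rule converse_rtranclp_into_rtranclp)
    then show "s \<in> lang H" using s(1) by (simp add: lang_def lang_of_def)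
  qed
qed

lemma trS_gr: "sym_ok (Nts G) (Tms G) s \<Longrightarrow> \<exists>B. trS s = NT B \<and> B \<in> NS - {0}"
  by (cases s) (auto simp: sym_ok_def NS_def)

lemma trR_gr: assumes "\<forall>s\<in>set r. sym_ok (Nts G) (Tms G) s"
  shows "trR r \<noteq> [] \<and> (\<forall>s\<in>set (trR r). \<exists>B. s = NT B \<and> B \<in> NS - {0})"
  using assms trS_gr by (auto simp: trR_def NS_def)

lemma trP_gr: "q \<in> Prods G \<Longrightarrow> grounded_prod H 0 (trP q)"
  using G_ok(6)[of q] trR_gr by (cases q) (auto simp: NS_def SF_def)

lemma H_grounded: "grounded H"
proof -
  have "\<forall>p\<in>PR. grounded_prod H 0 p"
    unfolding PR_def using trP_gr G_ok(5) by (auto simp: NS_def SF_def)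
  then show ?thesis unfolding grounded_def by simp
qed

end

theorem proposition1:
  fixes G :: "('n, 't, 'f) igrammar"
  assumes "indexed_grammar G"
  shows "\<exists>G' :: (nat, 't, nat) igrammar.
           indexed_grammar G' \<and> Tms G' = Tms G \<and> grounded G' \<and> lang G' = lang G"
proof -
  have fin: "finite (Nts G)" "finite (Tms G)" "finite (Stk G)" using assms unfolding indexed_grammar_def by auto
  obtain cN :: "'n \<Rightarrow> nat" and k1 where "cN ` Nts G = {i. i < k1}" "inj_on cN (Nts G)"
    using finite_imp_inj_to_nat_seg[OF fin(1)] by blast
  moreover obtain cT :: "'t \<Rightarrow> nat" and k2 where "cT ` Tms G = {i. i < k2}" "inj_on cT (Tms G)"
    using finite_imp_inj_to_nat_seg[OF fin(2)] by blast
  moreover obtain cF :: "'f \<Rightarrow> nat" and k3 where "cF ` Stk G = {i. i < k3}" "inj_on cF (Stk G)"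
    using finite_imp_inj_to_nat_seg[OF fin(3)] by blast
  ultimately interpret gr G cN cT cF by unfold_locales (use assms in auto)
  show ?thesis using H_ig lang_H H_grounded by (intro exI[of _ H]) simp
qed

end
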